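(* Let $(p_m)$ be a sequence of primes with $p_m\to\infty$, and let $c_m=(c_{m,1},\dots,c_{m,b})\in\mathbb{F}_{p_m}^b$. Assume that for every nonzero rational vector $(\alpha_1,\dots,\alpha_b)$, for almost all $m$ it is not the case that $\sum_{i=1}^b\alpha_ic_{m,i}=0$ in $\mathbb{F}_{p_m}$. Let $U$ be a nonempty open subset of $\mathbb{T}^b$, let $k\in\mathbb{N}$ and $l\in(\mathbb{Z}/k\mathbb{Z})^*$. Then for arbitrarily large $m$ there is $e_m\in\mathbb{N}$ with $e_m\equiv l\pmod k$ and $\Psi_{p_m}(e_mc_m)\in U$.
   Context: $\mathbb{T}=\{z\in\mathbb{C}:|z|=1\}$; $\Psi_p(n+p\mathbb{Z})=\exp(2\pi i n/p)$ is the standard additive character of $\mathbb{F}_p$, applied coordinatewise to tuples. *)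

theory Defs
  imports "HOL-Analysis.Analysis" "HOL-Number_Theory.Number_Theory"
begin

definition torus :: "(complex ^ 'b) set" where
  "torus = {z. \<forall>i. norm (z $ i) = 1}"

definition Psi :: "nat \<Rightarrow> int \<Rightarrow> complex" where
  "Psi p n = exp (2 * complex_of_real pi * \<i> * of_int n / of_nat p)"

text \<open>Image of a rational number a/d (reduced, d > 0) in F_p, as an integer representative
  a * d^(-1) mod p. Meaningful when p does not divide d.\<close>
definition rat_mod :: "nat \<Rightarrow> rat \<Rightarrow> int" where
  "rat_mod p q = (case quotient_of q of (a, d) \<Rightarrow> a * (SOME y. [d * y = 1] (mod int p)))"

definition rat_comb_zero_mod :: "nat \<Rightarrow> ('b::finite \<Rightarrow> rat) \<Rightarrow> ('b \<Rightarrow> int) \<Rightarrow> bool" where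
  "rat_comb_zero_mod p \<alpha> c \<longleftrightarrow> [(\<Sum>i\<in>UNIV. rat_mod p (\<alpha> i) * c i) = 0] (mod int p)"

end

theory Submission imports Defs "HOL-Real_Asymp.Real_Asymp" begin

lemma kernel1:
  "complex_of_real (((1 + cos t)/2)^N) =
     (\<Sum>j\<le>2*N. complex_of_real (real (2*N choose j) / 4^N) * cis ((real j - real N) * t))"
proof -
  have h1: "(1 + cos t)/2 = cos (t/2)^2"
    using cos_double_cos[of "t/2"] by simp
  have h2: "complex_of_real (cos (t/2)) = (cis (t/2) + cis (-(t/2)))/2"
    by (simp add: complex_eq_iff)
  have "complex_of_real (((1 + cos t)/2)^N) = (complex_of_real (cos (t/2)))^(2*N)"
    by (simp add: h1 power_mult)
  also have "\<dots> = (cis (t/2) + cis (-(t/2)))^(2*N) / 4^N"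
    by (simp add: h2 power_divide power_mult)
  also have "\<dots> = (\<Sum>j\<le>2*N. of_nat (2*N choose j) * cis (t/2)^j * cis (-(t/2))^(2*N-j)) / 4^N"
    by (simp add: binomial_ring)
  also have "\<dots> = (\<Sum>j\<le>2*N. complex_of_real (real (2*N choose j) / 4^N) * cis ((real j - real N) * t))"
    unfolding sum_divide_distrib
  proof (rule sum.cong[OF refl])
    fix j assume "j \<in> {..2*N}"
    then have j: "j \<le> 2*N" by simp
    have "cis (t/2)^j * cis (-(t/2))^(2*N-j) = cis ((real j - real N) * t)"
      unfolding Complex.DeMoivre cis_mult using j by (intro arg_cong[where f=cis]) (simp add: of_nat_diff algebra_simps)
    then show "of_nat (2*N choose j) * cis (t/2)^j * cis (-(t/2))^(2*N-j) / 4^N =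
       complex_of_real (real (2*N choose j) / 4^N) * cis ((real j - real N) * t)"
      by (simp add: mult.assoc)
  qed
  finally show ?thesis .
qed

lemma geo0:
  fixes h :: int and p :: nat
  assumes "p > 0" "\<not> int p dvd h"
  shows "(\<Sum>e<p. cis (2*pi*real e* of_int h/real p)) = 0"
proof -
  define w where "w = cis (2*pi* of_int h/real p)"
  have pw: "cis (2*pi*real e* of_int h/real p) = w^e" for e
    unfolding w_def Complex.DeMoivre by (intro arg_cong[where f=cis]) simp
  have wp: "w^p = 1"
    using assms(1) by (simp add: w_def Complex.DeMoivre)
  have "w \<noteq> 1"
  proof
    assume "w = 1"
    then have "cos (2*pi* of_int h/real p) = 1" unfolding w_def
      by (metis cis.sel(1) one_complex.sel(1))
    then obtain n :: int where n: "2*pi* of_int h/real p = of_int n * 2 * pi"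
      using cos_one_2pi_int by blast
    then have "real_of_int h = of_int n * real p" using assms(1)
      by (simp add: field_simps)
    then have "h = n * int p" by (metis of_int_eq_iff of_int_mult of_int_of_nat_eq)
    then show False using assms(2) by simp
  qed
  then show ?thesis
    by (simp add: pw geometric_sum wp)
qed

lemma cisdist: "cmod (cis x - cis a)^2 = 2 - 2*cos(x - a)"
proof -
  have "cmod (cis x - cis a)^2 = (cos x - cos a)^2 + (sin x - sin a)^2"
    by (simp add: cmod_power2)
  also have "\<dots> = (sin x ^2 + cos x^2) + (sin a^2 + cos a^2) - 2*(cos x * cos a + sin x * sin a)"
    by (simp add: power2_eq_square algebra_simps)
  also have "\<dots> = 2 - 2*cos(x - a)" by (simp add: cos_diff)
  finally show ?thesis .
qed

lemma Psi_cis: "Psi p n = cis (2*pi* of_int n/real p)"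
  by (simp add: Psi_def cis_conv_exp mult_ac)

lemma Psi_periodic: "p > 0 \<Longrightarrow> Psi p (n + int p * s) = Psi p n"
proof -
  assume p: "p > 0"
  have "2*pi* of_int (n + int p * s)/real p = 2*pi* of_int n/real p + 2*pi* of_int s"
    using p by (simp add: field_simps)
  then show ?thesis
    by (simp add: Psi_cis cis_mult[symmetric])
qed

lemma prod_cis: "finite A \<Longrightarrow> (\<Prod>i\<in>A. cis (f i)) = cis (\<Sum>i\<in>A. f i)"
  by (induction A rule: finite_induct) (auto simp: cis_mult)

lemma rat_comb_int:
  fixes a c :: "'b::finite \<Rightarrow> int"
  assumes "int p dvd (\<Sum>i\<in>UNIV. a i * c i)"
  shows "rat_comb_zero_mod p (\<lambda>i. of_int (a i)) c"
proof -
  define s where "s = (SOME y. [1 * y = 1] (mod int p))"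
  have s: "[s = 1] (mod int p)" unfolding s_def
    by (rule someI2[of _ 1]) auto
  have rm: "rat_mod p (of_int n) = n * s" for n
    by (simp add: rat_mod_def quotient_of_int s_def)
  have "[(\<Sum>i\<in>UNIV. rat_mod p (of_int (a i)) * c i) = (\<Sum>i\<in>UNIV. a i * 1 * c i)] (mod int p)"
    unfolding rm by (intro cong_sum cong_mult cong_refl s)
  also have "[(\<Sum>i\<in>UNIV. a i * 1 * c i) = 0] (mod int p)"
    using assms by (simp add: cong_0_iff)
  finally show ?thesis unfolding rat_comb_zero_mod_def .
qed


lemma half_cos_ge: "0 \<le> (1 + cos (x::real))/2"
  using cos_ge_minus_one[of x] by argo

lemma half_cos_le: "(1 + cos (x::real))/2 \<le> 1"
  using cos_le_one[of x] by argo

lemma half_le: "(y::real) \<le> 1 - \<eta> \<Longrightarrow> (1 + y)/2 \<le> 1 - \<eta>/2"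
  by (simp add: field_simps)

lemma cos_close: "1 - d^2/2 < (c::real) \<Longrightarrow> 2 - 2*c < d^2"
  by (simp add: field_simps)

theorem lemma3p9:
  fixes p :: "nat \<Rightarrow> nat" and c :: "nat \<Rightarrow> 'b::finite \<Rightarrow> int"
    and U :: "(complex ^ 'b) set" and k :: nat and l :: int
  assumes "\<And>m. prime (p m)"
    and "filterlim p at_top sequentially"
    and "\<And>\<alpha> :: 'b \<Rightarrow> rat. (\<exists>i. \<alpha> i \<noteq> 0) \<Longrightarrow>
            eventually (\<lambda>m. \<not> rat_comb_zero_mod (p m) \<alpha> (c m)) sequentially"
    and "openin (top_of_set torus) U" and "U \<noteq> {}"
    and "k > 0" and "coprime l (int k)"
  shows "frequently (\<lambda>m. \<exists>e::nat. [int e = l] (mod int k) \<and>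
            (\<chi> i. Psi (p m) (int e * c m i)) \<in> U) sequentially"
proof -
  let ?B = "CARD('b)"
  have B0: "real ?B > 0" by simp
  obtain u where u: "u \<in> U" using assms(5) by blast
  from assms(4) have Ut: "U \<subseteq> torus" and Uo: "\<forall>x\<in>U. \<exists>e>0. \<forall>x'\<in>torus. dist x' x < e \<longrightarrow> x' \<in> U"
    by (simp_all add: openin_euclidean_subtopology_iff)
  obtain \<epsilon> where \<epsilon>: "\<epsilon> > 0" "\<forall>x'\<in>torus. dist x' u < \<epsilon> \<longrightarrow> x' \<in> U"
    using Uo u by blast
  define \<epsilon>' where "\<epsilon>' = min \<epsilon> 1"
  define d where "d = \<epsilon>' / real ?B"
  have d: "d > 0" "d \<le> 1" "real ?B * d \<le> \<epsilon>"
  proof -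
    have "1 \<le> real ?B" by (simp add: Suc_le_eq)
    moreover have "\<epsilon>' \<le> 1" "\<epsilon>' \<le> \<epsilon>" "\<epsilon>' > 0" using \<epsilon>(1) by (auto simp: \<epsilon>'_def)
    ultimately show "d > 0" "d \<le> 1" "real ?B * d \<le> \<epsilon>"
      unfolding d_def using B0 by (auto simp: divide_le_eq intro: order_trans)
  qed
  define \<eta> where "\<eta> = d^2/2"
  define r where "r = 1 - \<eta>/2"
  have \<eta>: "\<eta> > 0" "\<eta> \<le> 1/2" using d by (auto simp: \<eta>_def power_le_one)
  have r: "0 < r" "r < 1" using \<eta> by (auto simp: r_def)
  define a where "a i = Arg (u$i)" for i
  have ua: "u$i = cis (a i)" for i
  proof -
    have "norm (u$i) = 1" using u Ut by (auto simp: torus_def)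
    then show ?thesis using rcis_cmod_Arg[of "u$i"] by (simp add: rcis_def a_def)
  qed
  have lim: "(\<lambda>N. (2 * real N) ^ ?B * r ^ N) \<longlonglongrightarrow> 0"
    using r by real_asymp
  have "eventually (\<lambda>N. (2 * real N) ^ ?B * r ^ N < 1 \<and> N > 0) sequentially"
    using order_tendstoD(2)[OF lim, of 1] eventually_gt_at_top[of 0]
    by (auto intro: eventually_conj)
  then obtain N where N: "(2 * real N) ^ ?B * r ^ N < 1" "N > 0"
    by (auto simp: eventually_sequentially)
  define coef where "coef j = real (2*N choose j) / 4^N" for j
  define A where "A = coef N ^ ?B"
  have A: "r^N < A"
  proof -
    have "4^N / (2*real N) \<le> real (2*N choose N)"
      using central_binomial_lower_bound[OF N(2)] .
    then have "1 / (2*real N) \<le> coef N"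
      by (simp add: coef_def field_simps)
    then have "(1 / (2*real N))^?B \<le> A" unfolding A_def
      by (intro power_mono) (use N in auto)
    moreover have "r^N < (1 / (2*real N))^?B"
      using N by (simp add: power_one_over field_simps)
    ultimately show ?thesis by simp
  qed
  define Js where "Js = PiE (UNIV::'b set) (\<lambda>_. {..2*N})"
  define J0 where "J0 = (\<lambda>_::'b. N)"
  have finJs: "finite Js" unfolding Js_def by (intro finite_PiE) auto
  have J0in: "J0 \<in> Js" unfolding Js_def J0_def by auto
  define h where "h m J = (\<Sum>i\<in>UNIV. (int (J i) - int N) * c m i)" for m and J :: "'b \<Rightarrow> nat"
  have ev1: "eventually (\<lambda>m. \<forall>J\<in>Js-{J0}. \<not> int (p m) dvd h m J) sequentially"
  proof (rule eventually_ball_finite)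
    show "finite (Js - {J0})" using finJs by simp
    show "\<forall>J\<in>Js - {J0}. \<forall>\<^sub>F m in sequentially. \<not> int (p m) dvd h m J"
    proof
      fix J assume J: "J \<in> Js - {J0}"
      then obtain i where "J i \<noteq> N" unfolding J0_def by auto
      then have "\<exists>i. rat_of_int (int (J i) - int N) \<noteq> 0" by auto
      from assms(3)[OF this] show "\<forall>\<^sub>F m in sequentially. \<not> int (p m) dvd h m J"
      proof (rule eventually_mono)
        fix m assume "\<not> rat_comb_zero_mod (p m) (\<lambda>i. rat_of_int (int (J i) - int N)) (c m)"
        then show "\<not> int (p m) dvd h m J" unfolding h_def using rat_comb_int[of "p m" "\<lambda>i. int (J i) - int N" "c m"] by blast
      qed
    qed
  qed
  have ev2: "eventually (\<lambda>m. p m > k) sequentially"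
  proof -
    have "eventually (\<lambda>x. Suc k \<le> p x) sequentially"
      using assms(2) unfolding filterlim_at_top by blast
    then show ?thesis by (rule eventually_mono) simp
  qed
  have key: "\<exists>e::nat. [int e = l] (mod int k) \<and> (\<chi> i. Psi (p m) (int e * c m i)) \<in> U"
    if H1: "\<forall>J\<in>Js-{J0}. \<not> int (p m) dvd h m J" and H2: "p m > k" for m
  proof -
    define q where "q = p m"
    have q: "q > 0" "prime q" using assms(1) by (auto simp: q_def prime_gt_0_nat)
    define \<theta> where "\<theta> e i = 2*pi*real e * of_int (c m i)/real q - a i" for e :: nat and i
    define G where "G e = (\<Prod>i\<in>UNIV. ((1 + cos (\<theta> e i))/2)^N)" for e
    define \<beta> where "\<beta> J = (\<Sum>i\<in>UNIV. (real (J i) - real N) * a i)" for J :: "'b \<Rightarrow> nat"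
    have Gexp: "complex_of_real (G e) = (\<Sum>J\<in>Js. complex_of_real (\<Prod>i\<in>UNIV. coef (J i)) * cis (- \<beta> J)
                  * cis (2*pi*real e * of_int (h m J)/real q))" for e
    proof -
      have "complex_of_real (G e) = (\<Prod>i\<in>UNIV. \<Sum>j\<le>2*N. complex_of_real (coef j) * cis ((real j - real N) * \<theta> e i))"
        by (simp only: G_def of_real_prod kernel1 coef_def)
      also have "\<dots> = (\<Sum>J\<in>Js. \<Prod>i\<in>UNIV. complex_of_real (coef (J i)) * cis ((real (J i) - real N) * \<theta> e i))"
        unfolding Js_def by (rule prod_sum_PiE) auto
      also have "\<dots> = (\<Sum>J\<in>Js. complex_of_real (\<Prod>i\<in>UNIV. coef (J i)) * cis (- \<beta> J)
                  * cis (2*pi*real e * of_int (h m J)/real q))"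
      proof (rule sum.cong[OF refl])
        fix J :: "'b \<Rightarrow> nat"
        have "(\<Sum>i\<in>UNIV. (real (J i) - real N) * \<theta> e i) =
              (\<Sum>i\<in>UNIV. 2*pi*real e * ((real (J i) - real N) * of_int (c m i))/real q - (real (J i) - real N) * a i)"
          by (rule sum.cong) (use q in \<open>auto simp: \<theta>_def field_simps\<close>)
        also have "\<dots> = 2*pi*real e * (\<Sum>i\<in>UNIV. (real (J i) - real N) * of_int (c m i))/real q - \<beta> J"
          by (simp add: sum_subtractf sum_distrib_left sum_divide_distrib \<beta>_def)
        also have "\<dots> = - \<beta> J + 2*pi*real e * of_int (h m J)/real q"
          by (simp add: h_def)
        finally have eq: "(\<Sum>i\<in>UNIV. (real (J i) - real N) * \<theta> e i) = - \<beta> J + 2*pi*real e * of_int (h m J)/real q" .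
        show "(\<Prod>i\<in>UNIV. complex_of_real (coef (J i)) * cis ((real (J i) - real N) * \<theta> e i)) =
              complex_of_real (\<Prod>i\<in>UNIV. coef (J i)) * cis (- \<beta> J) * cis (2*pi*real e * of_int (h m J)/real q)"
          by (simp add: prod.distrib prod_cis eq cis_mult mult.assoc)
      qed
      finally show ?thesis .
    qed
    have "complex_of_real (\<Sum>e<q. G e) = (\<Sum>J\<in>Js. complex_of_real (\<Prod>i\<in>UNIV. coef (J i)) * cis (- \<beta> J)
                  * (\<Sum>e<q. cis (2*pi*real e * of_int (h m J)/real q)))"
      unfolding of_real_sum Gexp by (subst sum.swap) (simp add: sum_distrib_left)
    also have "\<dots> = complex_of_real (\<Prod>i\<in>UNIV. coef (J0 i)) * cis (- \<beta> J0)
                  * (\<Sum>e<q. cis (2*pi*real e * of_int (h m J0)/real q))"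
    proof -
      have "(\<Sum>J\<in>Js-{J0}. complex_of_real (\<Prod>i\<in>UNIV. coef (J i)) * cis (- \<beta> J)
                  * (\<Sum>e<q. cis (2*pi*real e * of_int (h m J)/real q))) = 0"
        using H1 q(1) by (intro sum.neutral) (auto simp: geo0 q_def)
      then show ?thesis
        by (simp add: sum.remove[OF finJs J0in])
    qed
    also have "\<dots> = complex_of_real (real q * A)"
      by (simp add: J0_def h_def \<beta>_def A_def)
    finally have sumG: "(\<Sum>e<q. G e) = real q * A"
      using of_real_eq_iff by blast
    have "\<exists>e<q. \<forall>i. cos (\<theta> e i) > 1 - \<eta>"
    proof (rule ccontr)
      assume "\<not> ?thesis"
      then have bad: "\<forall>e<q. \<exists>i. cos (\<theta> e i) \<le> 1 - \<eta>" by (meson not_less)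
      have fb: "0 \<le> ((1 + cos (\<theta> e i))/2)^N \<and> ((1 + cos (\<theta> e i))/2)^N \<le> 1" for e i
      proof -
        have "0 \<le> (1 + cos (\<theta> e i))/2"
          by (rule half_cos_ge)
        moreover have "(1 + cos (\<theta> e i))/2 \<le> 1"
          by (rule half_cos_le)
        ultimately show ?thesis by (blast intro: zero_le_power power_le_one)
      qed
      have "G e \<le> r^N" if e: "e < q" for e
      proof -
        obtain i where i: "cos (\<theta> e i) \<le> 1 - \<eta>" using bad e by blast
        have G: "G e = ((1 + cos (\<theta> e i))/2)^N * (\<Prod>j\<in>UNIV-{i}. ((1 + cos (\<theta> e j))/2)^N)"
          unfolding G_def by (rule prod.remove) simp_all
        have c1: "(1 + cos (\<theta> e i))/2 \<le> r"
          using i unfolding r_def by (rule half_le)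
        have c0: "0 \<le> (1 + cos (\<theta> e i))/2"
          by (rule half_cos_ge)
        have f1: "((1 + cos (\<theta> e i))/2)^N \<le> r^N"
          by (rule power_mono[OF c1 c0])
        have P1: "(\<Prod>j\<in>UNIV-{i}. ((1 + cos (\<theta> e j))/2)^N) \<le> 1"
          using fb by (intro prod_le_1) blast+
        have P0: "0 \<le> (\<Prod>j\<in>UNIV-{i}. ((1 + cos (\<theta> e j))/2)^N)"
          using fb by (intro prod_nonneg) blast
        have rN: "0 \<le> r^N" using r by simp
        have "G e \<le> r^N * 1" unfolding G
          by (rule mult_mono[OF f1 P1 rN P0])
        then show ?thesis by simp
      qed
      then have "(\<Sum>e<q. G e) \<le> of_nat (card {..<q}) * r^N"
        by (intro sum_bounded_above) auto
      then have "real q * A \<le> real q * r^N" using sumG by simp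
      then have "A \<le> r^N" using q(1) by simp
      then show False using A by simp
    qed
    then obtain e where e: "e < q" "\<forall>i. cos (\<theta> e i) > 1 - \<eta>" by blast
    define z where "z = (\<chi> i. Psi q (int e * c m i))"
    have zi: "z$i = cis (\<theta> e i + a i)" for i
      by (simp add: z_def Psi_cis \<theta>_def mult.assoc)
    have zt: "z \<in> torus" by (simp add: torus_def zi)
    have close: "norm (z$i - u$i) < d" for i
    proof -
      have "norm (z$i - u$i)^2 = 2 - 2 * cos (\<theta> e i)"
        by (simp add: zi ua cisdist)
      also have "\<dots> < d^2" using e(2)[rule_format, of i] unfolding \<eta>_def by (rule cos_close)
      finally show ?thesis by (rule power2_less_imp_less) (use d in simp)
    qed
    have "dist z u \<le> (\<Sum>i\<in>UNIV. norm ((z - u)$i))"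
      unfolding dist_norm norm_vec_def by (rule L2_set_le_sum) auto
    also have "\<dots> < (\<Sum>i\<in>(UNIV::'b set). d)"
      by (rule sum_strict_mono) (simp_all add: close)
    also have "\<dots> \<le> \<epsilon>" using d by simp
    finally have "z \<in> U" using \<epsilon>(2) zt by blast
    have "\<not> q dvd k"
    proof
      assume "q dvd k"
      then have "q \<le> k" using assms(6) by (rule dvd_imp_le)
      then show False using H2 unfolding q_def by simp
    qed
    then have "coprime q k" by (rule prime_imp_coprime[OF q(2)])
    then have "coprime (int q) (int k)" by simp
    then obtain x where x: "[int q * x = 1] (mod int k)"
      using cong_solve_coprime_int by blast
    define t where "t = ((l - int e) * x) mod int k"
    have t0: "t \<ge> 0" using assms(6) by (simp add: t_def)
    define e' where "e' = nat (int e + int q * t)"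
    have e': "int e' = int e + int q * t" using t0 by (simp add: e'_def)
    have "[int e + int q * t = int e + (int q * x) * (l - int e)] (mod int k)"
      by (intro cong_add cong_refl) (simp add: t_def cong_def mod_mult_right_eq mult_ac)
    also have "[int e + (int q * x) * (l - int e) = int e + 1 * (l - int e)] (mod int k)"
      by (intro cong_add cong_mult cong_refl x)
    finally have cong: "[int e' = l] (mod int k)" by (simp add: e')
    have "(\<chi> i. Psi (p m) (int e' * c m i)) = z"
    proof -
      have "Psi q (int e' * c m i) = Psi q (int e * c m i)" for i
        using Psi_periodic[OF q(1), of "int e * c m i" "t * c m i"]
        by (simp add: e' algebra_simps)
      then show ?thesis by (simp add: z_def q_def vec_eq_iff)
    qed
    then show ?thesis using cong \<open>z \<in> U\<close> by blast
  qed
  show ?thesis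
    by (rule eventually_frequently[OF sequentially_bot])
       (use eventually_conj[OF ev1 ev2] in \<open>rule eventually_mono, use key in blast\<close>)
qed

end
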